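(* Suppose $(\mathcal W,\mathcal W,\mu)$ is a reduced system of the FTvN system $(\mathcal V,\mathcal W,\lambda)$. Let $C_{\mathcal V}$ and $C_{\mathcal W}$ denote the centers of $(\mathcal V,\mathcal W,\lambda)$ and $(\mathcal W,\mathcal W,\mu)$ respectively. Then: (a) $\operatorname{ran}\mu=\operatorname{ran}\lambda$ and $\mu^2=\mu$. (b) $\lambda(C_{\mathcal V})=\mu(C_{\mathcal W})=C_{\mathcal W}$. (c) $\dim C_{\mathcal V}=\dim\lambda(C_{\mathcal V})=\dim\mu(C_{\mathcal W})=\dim C_{\mathcal W}$. (d) $e$ is a unit element of $(\mathcal V,\mathcal W,\lambda)$ if and only if $\lambda(e)$ is a unit element of $(\mathcal W,\mathcal W,\mu)$.
   Context: A Fan-Theobald-von Neumann (FTvN) system is a triple $(\mathcal V,\mathcal W,\lambda)$ where $\mathcal V,\mathcal W$ are real inner product spaces and $\lambda:\mathcal V\to\mathcal W$ is a map such that: (A1) $\|\lambda(x)\|=\|x\|$ for all $x$; (A2) $\langle x,y\rangle\le\langle\lambda(x),\lambda(y)\rangle$ for all $x,y$; (A3) for every $c\in\mathcal V$ and $q\in\lambda(\mathcal V)$ there exists $x$ with $\lambda(x)=q$ and $\langle c,x\rangle=\langle\lambda(c),\lambda(x)\rangle$. In a FTvN system, $x,y$ commute if $\langle x,y\rangle=\langle\lambda(x),\lambda(y)\rangle$; the center is the set of elements commuting with every element; a unit element is a nonzero $e$ such that the center equals $\mathbb Re$. A FTvN system $(\mathcal W,\mathcal W,\mu)$ is a reduced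 system of $(\mathcal V,\mathcal W,\lambda)$ if (C1) $\mu\circ\lambda=\lambda$ and (C2) $\operatorname{ran}\mu\subseteq\operatorname{ran}\lambda$. *)

theory Defs
  imports "HOL-Analysis.Analysis"
begin

definition ftvn :: "('v::real_inner \<Rightarrow> 'w::real_inner) \<Rightarrow> bool" where
  "ftvn lam \<longleftrightarrow>
     (\<forall>x. norm (lam x) = norm x) \<and>
     (\<forall>x y. inner x y \<le> inner (lam x) (lam y)) \<and>
     (\<forall>c q. q \<in> range lam \<longrightarrow> (\<exists>x. lam x = q \<and> inner c x = inner (lam c) (lam x)))"

definition commute :: "('v::real_inner \<Rightarrow> 'w::real_inner) \<Rightarrow> 'v \<Rightarrow> 'v \<Rightarrow> bool" where
  "commute lam x y \<longleftrightarrow> inner x y = inner (lam x) (lam y)"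

definition center :: "('v::real_inner \<Rightarrow> 'w::real_inner) \<Rightarrow> 'v set" where
  "center lam = {x. \<forall>y. commute lam x y}"

definition unit_element :: "('v::real_inner \<Rightarrow> 'w::real_inner) \<Rightarrow> 'v \<Rightarrow> bool" where
  "unit_element lam e \<longleftrightarrow> e \<noteq> 0 \<and> center lam = range (\<lambda>c::real. c *\<^sub>R e)"

definition reduced_system :: "('v::real_inner \<Rightarrow> 'w::real_inner) \<Rightarrow> ('w \<Rightarrow> 'w) \<Rightarrow> bool" where
  "reduced_system lam mu \<longleftrightarrow> ftvn lam \<and> ftvn mu \<and> mu \<circ> lam = lam \<and> range mu \<subseteq> range lam"

end

theory Submission
  imports Defs
begin

lemma ftvn_norm: "ftvn lam \<Longrightarrow> norm (lam x) = norm x"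
  by (simp add: ftvn_def)

lemma ftvn_inner_self: "ftvn lam \<Longrightarrow> inner (lam x) (lam x) = inner x x"
  by (metis ftvn_norm power2_norm_eq_inner)

lemma ftvn_le: "ftvn lam \<Longrightarrow> inner x y \<le> inner (lam x) (lam y)"
  by (simp add: ftvn_def)

lemma ftvn_A3: "ftvn lam \<Longrightarrow> q \<in> range lam \<Longrightarrow> \<exists>x. lam x = q \<and> inner c x = inner (lam c) (lam x)"
  by (simp add: ftvn_def)

lemma ftvn_zero: "ftvn lam \<Longrightarrow> lam 0 = 0"
  using ftvn_norm[of lam 0] by simp

lemma center_inner: "c \<in> center lam \<Longrightarrow> inner c y = inner (lam c) (lam y)"
  by (simp add: center_def commute_def)

lemma center_inner2: "c \<in> center lam \<Longrightarrow> inner y c = inner (lam y) (lam c)"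
  by (metis center_inner inner_commute)

lemma zero_eqI: "inner (a::'a::real_inner) a = 0 \<Longrightarrow> a = 0"
  by simp

lemma center_add:
  assumes f: "ftvn lam" and c: "c \<in> center lam" and d: "d \<in> center lam"
  shows "lam (c + d) = lam c + lam d \<and> c + d \<in> center lam"
proof -
  have e1: "inner (lam (c+d)) (lam c) = inner (c+d) c" using center_inner2[OF c] by simp
  have e2: "inner (lam (c+d)) (lam d) = inner (c+d) d" using center_inner2[OF d] by simp
  have e3: "inner (lam c) (lam d) = inner c d" using center_inner[OF c] by simp
  have "inner (lam (c+d) - lam c - lam d) (lam (c+d) - lam c - lam d) = 0"
    using e1 e2 e3 ftvn_inner_self[OF f, of "c+d"] ftvn_inner_self[OF f, of c] ftvn_inner_self[OF f, of d]
    by (simp add: inner_diff_left inner_diff_right inner_add_left inner_add_right inner_commute)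
  then have "lam (c+d) - lam c - lam d = 0" by (rule zero_eqI)
  then have eq: "lam (c + d) = lam c + lam d" by (metis diff_diff_eq eq_iff_diff_eq_0)
  have "c + d \<in> center lam"
    unfolding center_def commute_def
    using center_inner[OF c] center_inner[OF d] by (simp add: eq inner_add_left)
  with eq show ?thesis by simp
qed

lemma center_scale:
  assumes f: "ftvn lam" and c: "c \<in> center lam"
  shows "lam (t *\<^sub>R c) = t *\<^sub>R lam c \<and> t *\<^sub>R c \<in> center lam"
proof -
  have e1: "inner (lam (t *\<^sub>R c)) (lam c) = inner (t *\<^sub>R c) c" using center_inner2[OF c] by simp
  have "inner (lam (t *\<^sub>R c) - t *\<^sub>R lam c) (lam (t *\<^sub>R c) - t *\<^sub>R lam c) = 0"
    using e1 ftvn_inner_self[OF f, of "t *\<^sub>R c"] ftvn_inner_self[OF f, of c]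
    by (simp add: inner_diff_left inner_diff_right inner_commute algebra_simps)
  then have eq: "lam (t *\<^sub>R c) = t *\<^sub>R lam c" by (metis zero_eqI eq_iff_diff_eq_0)
  have "t *\<^sub>R c \<in> center lam"
    unfolding center_def commute_def
    using center_inner[OF c] by (simp add: eq)
  with eq show ?thesis by simp
qed

lemma center_zero: "ftvn lam \<Longrightarrow> 0 \<in> center lam"
  by (simp add: center_def commute_def ftvn_zero)

lemma center_subspace: "ftvn lam \<Longrightarrow> subspace (center lam)"
  unfolding subspace_def using center_zero center_add center_scale by blast

lemma center_inj:
  assumes f: "ftvn lam" and c: "c \<in> center lam" and d: "d \<in> center lam" and e: "lam c = lam d"
  shows "c = d"
proof -
  have "inner (c - d) (c - d) = 0"
    using center_inner[OF c, of d] ftvn_inner_self[OF f, of c] ftvn_inner_self[OF f, of d] e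
    by (simp add: inner_diff_left inner_diff_right inner_commute)
  then show ?thesis by simp
qed

lemma center_sum:
  assumes f: "ftvn lam" and "finite S" "S \<subseteq> center lam"
  shows "lam (\<Sum>b\<in>S. u b *\<^sub>R b) = (\<Sum>b\<in>S. u b *\<^sub>R lam b)"
  using assms(2,3)
proof (induction S rule: finite_induct)
  case empty then show ?case by (simp add: ftvn_zero[OF f])
next
  case (insert x F)
  have s: "(\<Sum>b\<in>F. u b *\<^sub>R b) \<in> center lam"
    by (intro subspace_sum[OF center_subspace[OF f]] subspace_scale[OF center_subspace[OF f]])
      (use insert in auto)
  have x: "x \<in> center lam" using insert by simp
  have "lam (\<Sum>b\<in>insert x F. u b *\<^sub>R b) = lam (u x *\<^sub>R x + (\<Sum>b\<in>F. u b *\<^sub>R b))"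
    using insert by simp
  also have "\<dots> = u x *\<^sub>R lam x + lam (\<Sum>b\<in>F. u b *\<^sub>R b)"
    using center_add[OF f center_scale[OF f x, THEN conjunct2] s] center_scale[OF f x] by simp
  also have "\<dots> = (\<Sum>b\<in>insert x F. u b *\<^sub>R lam b)" using insert by simp
  finally show ?case .
qed

lemma dim_center:
  assumes f: "ftvn lam"
  shows "dim (center lam) = dim (lam ` center lam)"
proof -
  let ?C = "center lam"
  obtain B where B: "B \<subseteq> ?C" "independent B" "?C \<subseteq> span B" "card B = dim ?C"
    by (rule basis_exists)
  have inj: "inj_on lam ?C" by (intro inj_onI center_inj[OF f])
  have injB: "inj_on lam B" using inj B(1) inj_on_subset by blast
  have "lam ` ?C \<subseteq> span (lam ` B)"
  proof
    fix y assume "y \<in> lam ` ?C"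
    then obtain c where c: "c \<in> ?C" "y = lam c" by blast
    then have "c \<in> span B" using B by blast
    then obtain S u where S: "finite S" "S \<subseteq> B" "(\<Sum>v\<in>S. u v *\<^sub>R v) = c"
      unfolding span_explicit by blast
    have SC: "S \<subseteq> ?C" using S(2) B(1) by blast
    have "y = (\<Sum>v\<in>S. u v *\<^sub>R lam v)" using c(2) S(3) center_sum[OF f S(1) SC, of u] by simp
    also have "\<dots> \<in> span (lam ` B)"
      by (intro span_sum span_scale span_base) (use S(2) in blast)
    finally show "y \<in> span (lam ` B)" .
  qed
  moreover have "independent (lam ` B)"
  proof
    assume "dependent (lam ` B)"
    then obtain S u where S: "finite S" "S \<subseteq> lam ` B" "\<exists>v\<in>S. u v \<noteq> 0" "(\<Sum>v\<in>S. u v *\<^sub>R v) = 0"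
      unfolding dependent_explicit by blast
    define S' where "S' = {b\<in>B. lam b \<in> S}"
    have img: "lam ` S' = S" using S(2) unfolding S'_def by blast
    have injS: "inj_on lam S'" by (rule inj_on_subset[OF injB]) (auto simp: S'_def)
    have fin: "finite S'" using img injS S(1) finite_imageD by blast
    have sub: "S' \<subseteq> B" unfolding S'_def by blast
    have "(\<Sum>v\<in>S. u v *\<^sub>R v) = (\<Sum>b\<in>S'. u (lam b) *\<^sub>R lam b)"
      using sum.reindex[OF injS, of "\<lambda>v. u v *\<^sub>R v"] img by simp
    also have "\<dots> = lam (\<Sum>b\<in>S'. u (lam b) *\<^sub>R b)"
      using center_sum[OF f fin, of "\<lambda>b. u (lam b)"] sub B(1) by (metis subset_trans)
    finally have "lam (\<Sum>b\<in>S'. u (lam b) *\<^sub>R b) = 0" using S(4) by simp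
    then have z: "(\<Sum>b\<in>S'. u (lam b) *\<^sub>R b) = 0"
      using ftvn_norm[OF f, of "\<Sum>b\<in>S'. u (lam b) *\<^sub>R b"] by simp
    have ex: "\<exists>b\<in>S'. u (lam b) \<noteq> 0" using S(3) img by blast
    have "dependent B"
      unfolding dependent_explicit
      by (intro exI[of _ S'] exI[of _ "\<lambda>b. u (lam b)"] conjI fin sub z ex)
    with B(2) show False by simp
  qed
  moreover have "card (lam ` B) = dim ?C" using card_image[OF injB] B(4) by simp
  moreover have "lam ` B \<subseteq> lam ` ?C" using B(1) by blast
  ultimately have "dim (lam ` ?C) = dim ?C" by (intro dim_unique[of "lam ` B"])
  then show ?thesis by simp
qed

lemma red_fix: "reduced_system lam mu \<Longrightarrow> q \<in> range lam \<Longrightarrow> mu q = q"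
  unfolding reduced_system_def by (metis comp_apply rangeE)

lemma red_center_fix:
  assumes r: "reduced_system lam mu" and w: "w \<in> center mu"
  shows "mu w = w"
proof -
  have f: "ftvn mu" using r by (simp add: reduced_system_def)
  have mm: "mu (mu w) = mu w" using r red_fix[OF r] unfolding reduced_system_def by blast
  have "inner w (mu w) = inner (mu w) (mu w)" using center_inner[OF w, of "mu w"] mm by simp
  then have "inner (w - mu w) (w - mu w) = 0"
    using ftvn_inner_self[OF f, of w]
    by (simp add: inner_diff_left inner_diff_right inner_commute)
  then show ?thesis by simp
qed

lemma red_center_img:
  assumes r: "reduced_system lam mu" and c: "c \<in> center lam"
  shows "lam c \<in> center mu"
proof -
  have fl: "ftvn lam" and fm: "ftvn mu" using r by (auto simp: reduced_system_def)
  have fx: "\<And>x. mu (lam x) = lam x" using red_fix[OF r] by blast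
  have neg: "lam (- c) = - lam c" using center_scale[OF fl c, of "-1"] by simp
  show ?thesis unfolding center_def commute_def
  proof (intro CollectI allI)
    fix y
    have a: "inner (lam c) y \<le> inner (lam c) (mu y)" using ftvn_le[OF fm, of "lam c" y] fx by simp
    have b: "inner (lam (-c)) y \<le> inner (lam (-c)) (mu y)" using ftvn_le[OF fm, of "lam (-c)" y] fx by simp
    show "inner (lam c) y = inner (mu (lam c)) (mu y)" using a b neg fx by simp
  qed
qed

lemma red_center_pre:
  assumes r: "reduced_system lam mu" and x: "lam x \<in> center mu"
  shows "x \<in> center lam"
proof -
  have fl: "ftvn lam" and fm: "ftvn mu" using r by (auto simp: reduced_system_def)
  let ?w = "lam x"
  have nw: "- ?w \<in> center mu" using center_scale[OF fm x, of "-1"] by simp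
  have "mu (- ?w) = - ?w" using red_center_fix[OF r nw] .
  then have "- ?w \<in> range lam" using r unfolding reduced_system_def by (metis rangeI subsetD)
  then obtain z where z: "lam z = - ?w" "inner x z = inner (lam x) (lam z)"
    using ftvn_A3[OF fl] by blast
  have "inner (x + z) (x + z) = 0"
    using z ftvn_inner_self[OF fl, of x] ftvn_inner_self[OF fl, of z]
    by (simp add: inner_add_left inner_add_right inner_commute)
  then have "z = - x" by (simp add: add_eq_0_iff2)
  with z have neg: "lam (- x) = - lam x" by simp
  show ?thesis unfolding center_def commute_def
  proof (intro CollectI allI)
    fix y
    have a: "inner x y \<le> inner (lam x) (lam y)" using ftvn_le[OF fl] .
    have b: "inner (- x) y \<le> inner (lam (- x)) (lam y)" using ftvn_le[OF fl] .
    show "inner x y = inner (lam x) (lam y)" using a b neg by simp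
  qed
qed

theorem proposition10p2:
  fixes lam :: "'v::real_inner \<Rightarrow> 'w::real_inner" and mu :: "'w \<Rightarrow> 'w"
  assumes "reduced_system lam mu"
  shows "(range mu = range lam \<and> mu \<circ> mu = mu)
    \<and> (lam ` center lam = mu ` center mu \<and> mu ` center mu = center mu)
    \<and> (dim (center lam) = dim (lam ` center lam) \<and>
         dim (lam ` center lam) = dim (mu ` center mu) \<and>
         dim (mu ` center mu) = dim (center mu))
    \<and> (\<forall>e. unit_element lam e \<longleftrightarrow> unit_element mu (lam e))"
proof -
  note r = assms
  have fl: "ftvn lam" and fm: "ftvn mu" and sub: "range mu \<subseteq> range lam"
    using r by (auto simp: reduced_system_def)
  have fx: "\<And>x. mu (lam x) = lam x" using red_fix[OF r] by blast
  have A1: "range mu = range lam" using sub fx by (metis antisym image_subsetI rangeI)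
  have A2: "mu \<circ> mu = mu" using red_fix[OF r] sub by (auto simp: fun_eq_iff)
  have B2: "mu ` center mu = center mu" using red_center_fix[OF r] by force
  have B1: "lam ` center lam = center mu"
  proof
    show "lam ` center lam \<subseteq> center mu" using red_center_img[OF r] by blast
    show "center mu \<subseteq> lam ` center lam"
    proof
      fix w assume w: "w \<in> center mu"
      have "w \<in> range lam" using red_center_fix[OF r w] sub by (metis rangeI subsetD)
      then obtain x where "w = lam x" by blast
      with red_center_pre[OF r] w show "w \<in> lam ` center lam" by blast
    qed
  qed
  have C: "dim (center lam) = dim (lam ` center lam)" by (rule dim_center[OF fl])
  have D: "unit_element lam e \<longleftrightarrow> unit_element mu (lam e)" for e
  proof
    assume u: "unit_element lam e"
    then have e0: "e \<noteq> 0" and ce: "center lam = range (\<lambda>c::real. c *\<^sub>R e)"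
      by (auto simp: unit_element_def)
    have ec: "e \<in> center lam" using ce by (metis rangeI scaleR_one)
    have "lam e \<noteq> 0" using e0 ftvn_norm[OF fl, of e] by auto
    moreover have "center mu = range (\<lambda>c::real. c *\<^sub>R lam e)"
      using B1 ce center_scale[OF fl ec] by (auto simp: image_image)
    ultimately show "unit_element mu (lam e)" by (simp add: unit_element_def)
  next
    assume u: "unit_element mu (lam e)"
    then have e0: "lam e \<noteq> 0" and ce: "center mu = range (\<lambda>c::real. c *\<^sub>R lam e)"
      by (auto simp: unit_element_def)
    have lec: "lam e \<in> center mu" using ce by (metis rangeI scaleR_one)
    have ec: "e \<in> center lam" using red_center_pre[OF r lec] .
    have "e \<noteq> 0" using e0 ftvn_zero[OF fl] by auto
    moreover have "center lam = range (\<lambda>c::real. c *\<^sub>R e)"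
    proof
      show "range (\<lambda>c::real. c *\<^sub>R e) \<subseteq> center lam" using center_scale[OF fl ec] by blast
      show "center lam \<subseteq> range (\<lambda>c::real. c *\<^sub>R e)"
      proof
        fix x assume x: "x \<in> center lam"
        then have "lam x \<in> center mu" using red_center_img[OF r] by blast
        then obtain t where "lam x = t *\<^sub>R lam e" using ce by blast
        then have "lam x = lam (t *\<^sub>R e)" using center_scale[OF fl ec] by simp
        then have "x = t *\<^sub>R e" using center_inj[OF fl x] center_scale[OF fl ec] by blast
        then show "x \<in> range (\<lambda>c::real. c *\<^sub>R e)" by blast
      qed
    qed
    ultimately show "unit_element lam e" by (simp add: unit_element_def)
  qed
  show ?thesis using A1 A2 B1 B2 C D by simp
qed

end
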